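(* If $G$ is an extended $\mathcal C$-pair, then $\chi(G)\le\lceil\frac54\omega(G)\rceil$.
   Context: $\mathcal C$ is the class of $(P_4,C_4,2P_3)$-free graphs ($2P_3$: disjoint union of two copies of $P_3$). A graph is a $\mathcal C$-pair (with respect to a partition $(X,A)$ of its vertex set) if it is $P_6$-free and chordal, $A$ is a clique, $G[X]\in\mathcal C$, every vertex of $X$ has a neighbor in $A$, and any two non-adjacent vertices of $X$ have no common neighbor in $A$. A graph $G$ is an extended $\mathcal C$-pair if $V(G)$ can be partitioned into three sets $Q,X,A$ such that $G[X\cup A]$ is a $\mathcal C$-pair with respect to $(X,A)$, $Q$ is a clique, $Q$ is complete to $X$ (all edges present), and there are no edges between $Q$ and $A$. *)

theory Defs
  imports Complex_Main
begin

text \<open>A (finite simple) graph is given by a vertex set V and a symmetric,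
irreflexive adjacency relation E. Induced subgraphs G[S] are obtained by
restricting attention to a vertex subset S.\<close>

definition simple_graph :: "'a set \<Rightarrow> ('a \<Rightarrow> 'a \<Rightarrow> bool) \<Rightarrow> bool" where
  "simple_graph V E \<longleftrightarrow> finite V \<and> (\<forall>u v. E u v \<longrightarrow> E v u) \<and> (\<forall>v. \<not> E v v)"

definition has_induced :: "(nat \<Rightarrow> nat \<Rightarrow> bool) \<Rightarrow> nat \<Rightarrow> ('a \<Rightarrow> 'a \<Rightarrow> bool) \<Rightarrow> 'a set \<Rightarrow> bool" where
  "has_induced H n E S \<longleftrightarrow> (\<exists>f. inj_on f {..<n} \<and> f ` {..<n} \<subseteq> S \<and>
      (\<forall>i<n. \<forall>j<n. i \<noteq> j \<longrightarrow> (E (f i) (f j) \<longleftrightarrow> H i j)))"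

definition H_free :: "(nat \<Rightarrow> nat \<Rightarrow> bool) \<Rightarrow> nat \<Rightarrow> ('a \<Rightarrow> 'a \<Rightarrow> bool) \<Rightarrow> 'a set \<Rightarrow> bool" where
  "H_free H n E S \<longleftrightarrow> \<not> has_induced H n E S"

definition path_graph :: "nat \<Rightarrow> nat \<Rightarrow> bool" where
  "path_graph i j \<longleftrightarrow> i + 1 = j \<or> j + 1 = i"

definition cycle_graph :: "nat \<Rightarrow> nat \<Rightarrow> nat \<Rightarrow> bool" where
  "cycle_graph n i j \<longleftrightarrow> i + 1 = j \<or> j + 1 = i \<or> (i = 0 \<and> j = n - 1) \<or> (j = 0 \<and> i = n - 1)"

text \<open>2P_3: paths 0-1-2 and 3-4-5.\<close>
definition twoP3_graph :: "nat \<Rightarrow> nat \<Rightarrow> bool" where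
  "twoP3_graph i j \<longleftrightarrow> path_graph i j \<and> {i, j} \<noteq> {2, 3}"

definition P4_free where "P4_free E S \<longleftrightarrow> H_free path_graph 4 E S"
definition P6_free where "P6_free E S \<longleftrightarrow> H_free path_graph 6 E S"
definition C4_free where "C4_free E S \<longleftrightarrow> H_free (cycle_graph 4) 4 E S"
definition twoP3_free where "twoP3_free E S \<longleftrightarrow> H_free twoP3_graph 6 E S"

definition chordal where "chordal E S \<longleftrightarrow> (\<forall>n\<ge>4. H_free (cycle_graph n) n E S)"

definition in_class_C where
  "in_class_C E S \<longleftrightarrow> P4_free E S \<and> C4_free E S \<and> twoP3_free E S"

definition clique :: "('a \<Rightarrow> 'a \<Rightarrow> bool) \<Rightarrow> 'a set \<Rightarrow> bool" where
  "clique E K \<longleftrightarrow> (\<forall>x\<in>K. \<forall>y\<in>K. x \<noteq> y \<longrightarrow> E x y)"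

definition clique_number :: "'a set \<Rightarrow> ('a \<Rightarrow> 'a \<Rightarrow> bool) \<Rightarrow> nat" where
  "clique_number V E = Max {card K | K. K \<subseteq> V \<and> clique E K}"

definition proper_colouring :: "'a set \<Rightarrow> ('a \<Rightarrow> 'a \<Rightarrow> bool) \<Rightarrow> nat \<Rightarrow> ('a \<Rightarrow> nat) \<Rightarrow> bool" where
  "proper_colouring V E k c \<longleftrightarrow> (\<forall>v\<in>V. c v < k) \<and> (\<forall>u\<in>V. \<forall>v\<in>V. E u v \<longrightarrow> c u \<noteq> c v)"

definition chromatic_number :: "'a set \<Rightarrow> ('a \<Rightarrow> 'a \<Rightarrow> bool) \<Rightarrow> nat" where
  "chromatic_number V E = (LEAST k. \<exists>c. proper_colouring V E k c)"

definition C_pair :: "('a \<Rightarrow> 'a \<Rightarrow> bool) \<Rightarrow> 'a set \<Rightarrow> 'a set \<Rightarrow> bool" where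
  "C_pair E X A \<longleftrightarrow> X \<inter> A = {} \<and>
     P6_free E (X \<union> A) \<and> chordal E (X \<union> A) \<and> clique E A \<and> in_class_C E X \<and>
     (\<forall>x\<in>X. \<exists>a\<in>A. E x a) \<and>
     (\<forall>x\<in>X. \<forall>y\<in>X. x \<noteq> y \<and> \<not> E x y \<longrightarrow> \<not> (\<exists>a\<in>A. E x a \<and> E y a))"

definition extended_C_pair :: "'a set \<Rightarrow> ('a \<Rightarrow> 'a \<Rightarrow> bool) \<Rightarrow> bool" where
  "extended_C_pair V E \<longleftrightarrow> (\<exists>Q X A. Q \<union> X \<union> A = V \<and> Q \<inter> X = {} \<and> Q \<inter> A = {} \<and> X \<inter> A = {} \<and>
     C_pair E X A \<and> clique E Q \<and> (\<forall>q\<in>Q. \<forall>x\<in>X. E q x) \<and> (\<forall>q\<in>Q. \<forall>a\<in>A. \<not> E q a))"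

end

theory Submission
  imports Defs
begin


lemma greedy_colour:
  fixes S :: "'a set" and E :: "'a \<Rightarrow> 'a \<Rightarrow> bool" and h :: "'a \<Rightarrow> nat"
  assumes fin: "finite S" and sym: "\<forall>u v. E u v \<longrightarrow> E v u" and irr: "\<forall>v. \<not> E v v"
    and simp: "\<forall>v\<in>S. clique E {w\<in>S. E v w \<and> h v \<le> h w}"
    and cl: "\<forall>K\<subseteq>S. clique E K \<longrightarrow> card K \<le> m"
  shows "\<exists>c. (\<forall>v\<in>S. c v < m) \<and> (\<forall>u\<in>S. \<forall>v\<in>S. E u v \<longrightarrow> c u \<noteq> c v)"
proof -
  have "T \<subseteq> S \<longrightarrow> (\<exists>c. (\<forall>v\<in>T. c v < m) \<and> (\<forall>u\<in>T. \<forall>v\<in>T. E u v \<longrightarrow> c u \<noteq> c v))"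
    if "finite T" for T
    using that
  proof (induction T rule: finite_ranking_induct[where f = "\<lambda>v. - int (h v)"])
    case empty
    then show ?case by auto
  next
    case (insert x T)
    show ?case
    proof
      assume sub: "insert x T \<subseteq> S"
      then obtain c where c: "\<forall>v\<in>T. c v < m" "\<forall>u\<in>T. \<forall>v\<in>T. E u v \<longrightarrow> c u \<noteq> c v"
        using insert.IH by auto
      show "\<exists>c. (\<forall>v\<in>insert x T. c v < m) \<and> (\<forall>u\<in>insert x T. \<forall>v\<in>insert x T. E u v \<longrightarrow> c u \<noteq> c v)"
      proof (cases "x \<in> T")
        case True
        then show ?thesis using c by (metis insert_absorb)
      next
        case False
        define N where "N = {w\<in>T. E x w}"
        have hle: "\<forall>w\<in>T. h x \<le> h w" using insert.hyps(2) by force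
        have "N \<subseteq> {w\<in>S. E x w \<and> h x \<le> h w}" using sub hle N_def by auto
        moreover have "clique E {w\<in>S. E x w \<and> h x \<le> h w}" using simp sub by auto
        ultimately have cN: "clique E N" unfolding clique_def by blast
        have "clique E (insert x N)" unfolding clique_def
        proof (intro ballI impI)
          fix y z assume y: "y \<in> insert x N" and z: "z \<in> insert x N" and yz: "y \<noteq> z"
          show "E y z"
          proof (cases "y = x")
            case True then show ?thesis using z yz N_def by auto
          next
            case False
            then have yN: "y \<in> N" using y by auto
            show ?thesis
            proof (cases "z = x")
              case True then show ?thesis using yN N_def sym by auto
            next
              case False then show ?thesis using yN z yz cN unfolding clique_def by auto
            qed
          qed
        qed
        moreover have "insert x N \<subseteq> S" using sub N_def by auto
        ultimately have "card (insert x N) \<le> m" using cl by blast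
        moreover have "finite N" using insert.hyps(1) N_def by auto
        moreover have "x \<notin> N" using False N_def by auto
        ultimately have cN: "card N < m" by simp
        have "card (c ` N) < m" using cN card_image_le[OF \<open>finite N\<close>, of c] by linarith
        then have "\<not> {..<m} \<subseteq> c ` N" by (metis card_lessThan card_mono finite_imageI \<open>finite N\<close> not_le)
        then obtain col where col: "col < m" "col \<notin> c ` N" by auto
        define c' where "c' = c(x := col)"
        have "\<forall>v\<in>insert x T. c' v < m" using c col c'_def by auto
        moreover have "\<forall>u\<in>insert x T. \<forall>v\<in>insert x T. E u v \<longrightarrow> c' u \<noteq> c' v"
        proof (intro ballI impI)
          fix u v assume u: "u \<in> insert x T" and v: "v \<in> insert x T" and e: "E u v"
          show "c' u \<noteq> c' v"
          proof (cases "u = x")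
            case True
            then have "v \<noteq> x" using e irr by auto
            then have "v \<in> N" using v e True N_def by auto
            then show ?thesis using True \<open>v \<noteq> x\<close> col c'_def by auto
          next
            case uF: False
            show ?thesis
            proof (cases "v = x")
              case True
              then have "u \<in> N" using u e uF N_def sym by auto
              then show ?thesis using True uF col c'_def by (metis fun_upd_apply image_eqI)
            next
              case False
              then show ?thesis using uF u v e c c'_def by auto
            qed
          qed
        qed
        ultimately show ?thesis by blast
      qed
    qed
  qed
  then show ?thesis using fin by blast
qed



definition pdisj :: "'b set set \<Rightarrow> bool" where
  "pdisj F \<longleftrightarrow> (\<forall>S\<in>F. \<forall>T\<in>F. S \<noteq> T \<longrightarrow> S \<inter> T = {})"

lemma pad_subset:
  assumes "finite M" "A1 \<subseteq> M" "card A1 \<le> n" "n \<le> card M"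
  shows "\<exists>B. A1 \<subseteq> B \<and> B \<subseteq> M \<and> card B = n"
proof -
  have fA: "finite A1" using assms finite_subset by blast
  have "n - card A1 \<le> card (M - A1)" using assms fA by (simp add: card_Diff_subset)
  then obtain C where C: "C \<subseteq> M - A1" "card C = n - card A1" "finite C"
    using obtain_subset_with_card_n by metis
  have dj: "A1 \<inter> C = {}" using C(1) by blast
  have "card (A1 \<union> C) = card A1 + card C" using card_Un_disjoint[OF fA C(3) dj] .
  then have "card (A1 \<union> C) = n" using C(2) assms(3) by linarith
  moreover have "A1 \<union> C \<subseteq> M" using C(1) assms(2) by blast
  ultimately show ?thesis by blast
qed

lemma laminar_hit:
  fixes L :: "'b set set" and D :: "'b set \<Rightarrow> nat"
  assumes "finite L" "\<forall>S\<in>L. finite S"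
    "\<forall>S\<in>L. \<forall>T\<in>L. S \<subseteq> T \<or> T \<subseteq> S \<or> S \<inter> T = {}"
    "\<forall>S\<in>L. D S \<le> card S"
    "\<forall>F\<subseteq>L. pdisj F \<longrightarrow> sum D F \<le> q"
  shows "\<exists>A0. A0 \<subseteq> \<Union>L \<and> card A0 \<le> q \<and> (\<forall>S\<in>L. D S \<le> card (A0 \<inter> S))"
  using assms
proof (induction "card L" arbitrary: L q rule: less_induct)
  case less
  note finL = less.prems(1) and finS = less.prems(2) and lam = less.prems(3)
    and Dle = less.prems(4) and sb = less.prems(5)
  show ?case
  proof (cases "L = {}")
    case True then show ?thesis by auto
  next
    case False
    define mc where "mc = Max (card ` L)"
    have "mc \<in> card ` L" using finL False unfolding mc_def by (intro Max_in) auto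
    then obtain M where M0: "M \<in> L" "card M = mc" by auto
    have "\<forall>S\<in>L. card S \<le> card M" using finL M0 unfolding mc_def by auto
    note M = M0(1) this
    have Mmax: "\<forall>S\<in>L. M \<subseteq> S \<longrightarrow> S = M"
    proof (intro ballI impI)
      fix S assume "S \<in> L" "M \<subseteq> S"
      then show "S = M" using card_seteq[of S M] finS M by auto
    qed
    define Lin where "Lin = {S\<in>L. S \<subseteq> M \<and> S \<noteq> M \<and> S \<noteq> {}}"
    define Lout where "Lout = {S\<in>L. S \<inter> M = {} \<and> S \<noteq> M \<and> S \<noteq> {}}"
    have LinL: "Lin \<subseteq> L" and LoutL: "Lout \<subseteq> L" using Lin_def Lout_def by auto
    have "M \<notin> Lin" "M \<notin> Lout" using Lin_def Lout_def by auto
    then have "Lin \<subset> L" "Lout \<subset> L" using LinL LoutL M by auto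
    then have cLin: "card Lin < card L" and cLout: "card Lout < card L"
      using finL by (auto intro: psubset_card_mono)
    define FF where "FF = {F. F \<subseteq> Lin \<and> pdisj F}"
    have "FF \<subseteq> Pow Lin" using FF_def by auto
    moreover have "finite Lin" using LinL finL finite_subset by blast
    ultimately have finFF: "finite FF" by (simp add: finite_subset)
    have eFF: "{} \<in> FF" using FF_def pdisj_def by auto
    define r where "r = Max (sum D ` FF)"
    have "r \<in> sum D ` FF" unfolding r_def using finFF eFF by (intro Max_in) auto
    then obtain Fr where Fr: "Fr \<in> FF" "sum D Fr = r" by auto
    have rge: "\<forall>F\<in>FF. sum D F \<le> r" using finFF r_def by auto
    have finLin: "finite Lin" using LinL finL finite_subset by blast
    obtain A1 where A1: "A1 \<subseteq> \<Union>Lin" "card A1 \<le> r" "\<forall>S\<in>Lin. D S \<le> card (A1 \<inter> S)"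
    proof -
      have sX: "\<forall>F\<subseteq>Lin. pdisj F \<longrightarrow> sum D F \<le> r" using rge FF_def by auto
      have lamX: "\<forall>S\<in>Lin. \<forall>T\<in>Lin. S \<subseteq> T \<or> T \<subseteq> S \<or> S \<inter> T = {}" using lam[rule_format] LinL by (simp add: subset_iff)
      have fX: "\<forall>S\<in>Lin. finite S" using finS LinL by blast
      have DX: "\<forall>S\<in>Lin. D S \<le> card S" using Dle LinL by blast
      have "\<exists>A0. A0 \<subseteq> \<Union>Lin \<and> card A0 \<le> r \<and> (\<forall>S\<in>Lin. D S \<le> card (A0 \<inter> S))"
        by (rule less.hyps[OF cLin finLin fX lamX DX sX])
      then show ?thesis using that by blast
    qed
    define F0 where "F0 = (if D M \<le> r then Fr else {M})"
    define r' where "r' = sum D F0"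
    have F0sub: "F0 \<subseteq> Lin \<union> {M}" using F0_def Fr FF_def by auto
    have pF0: "pdisj F0" using F0_def Fr FF_def pdisj_def by auto
    have r'ge: "r \<le> r'" "D M \<le> r'" using r'_def F0_def Fr by auto
    have r'q: "r' \<le> q" using sb F0sub pF0 LinL M(1) r'_def by blast
    have finM: "finite M" using finS M by auto
    have r'M: "r' \<le> card M"
    proof (cases "D M \<le> r")
      case True
      have "sum D Fr \<le> sum card Fr" using Dle Fr FF_def LinL by (intro sum_mono) auto
      also have "\<dots> = card (\<Union>Fr)"
      proof -
        have "pdisj Fr" using Fr FF_def by auto
        then have "pairwise disjnt Fr" unfolding pdisj_def pairwise_def disjnt_def by blast
        then show ?thesis using card_Union_disjoint[of Fr] finS Fr FF_def LinL by fastforce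
      qed
      also have "\<dots> \<le> card M" using Fr FF_def Lin_def finM by (intro card_mono) auto
      finally show ?thesis using True r'_def F0_def Fr by auto
    next
      case False
      then show ?thesis using r'_def F0_def Dle M by auto
    qed
    have A1M: "A1 \<subseteq> M" using A1 Lin_def by auto
    obtain A1' where A1': "A1 \<subseteq> A1'" "A1' \<subseteq> M" "card A1' = r'"
      using pad_subset[OF finM A1M] A1(2) r'ge r'M by (meson le_trans)
    have finLout: "finite Lout" using LoutL finL finite_subset by blast
    obtain A2 where A2: "A2 \<subseteq> \<Union>Lout" "card A2 \<le> q - r'" "\<forall>S\<in>Lout. D S \<le> card (A2 \<inter> S)"
    proof -
      have sX: "\<forall>F\<subseteq>Lout. pdisj F \<longrightarrow> sum D F \<le> q - r'"
      proof (intro allI impI)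
        fix F assume F: "F \<subseteq> Lout" "pdisj F"
        have dj: "F \<inter> F0 = {}" using F F0sub Lout_def Lin_def by auto
        have "pdisj (F \<union> F0)"
          using F pF0 F0sub unfolding pdisj_def Lout_def Lin_def by blast
        moreover have "F \<union> F0 \<subseteq> L" using F LoutL F0sub LinL M by auto
        ultimately have "sum D (F \<union> F0) \<le> q" using sb by blast
        moreover have "finite F" "finite F0" using F finLout F0sub finLin finite_subset by blast+
        ultimately have "sum D F + r' \<le> q" using dj r'_def by (simp add: sum.union_disjoint)
        then show "sum D F \<le> q - r'" by simp
      qed
      have lamX: "\<forall>S\<in>Lout. \<forall>T\<in>Lout. S \<subseteq> T \<or> T \<subseteq> S \<or> S \<inter> T = {}" using lam[rule_format] LoutL by (simp add: subset_iff)
      have fX: "\<forall>S\<in>Lout. finite S" using finS LoutL by blast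
      have DX: "\<forall>S\<in>Lout. D S \<le> card S" using Dle LoutL by blast
      have "\<exists>A0. A0 \<subseteq> \<Union>Lout \<and> card A0 \<le> q - r' \<and> (\<forall>S\<in>Lout. D S \<le> card (A0 \<inter> S))"
        by (rule less.hyps[OF cLout finLout fX lamX DX sX])
      then show ?thesis using that by blast
    qed
    define A0 where "A0 = A1' \<union> A2"
    have "A0 \<subseteq> \<Union>L" using A0_def A1' A2 M LoutL by blast
    moreover have "card A0 \<le> q"
    proof -
      have "card A0 \<le> card A1' + card A2" using A0_def card_Un_le by blast
      then show ?thesis using A1' A2 r'q by linarith
    qed
    moreover have "\<forall>S\<in>L. D S \<le> card (A0 \<inter> S)"
    proof
      fix S assume S: "S \<in> L"
      have finA0: "finite A0"
        using A0_def A1' finM A2 finLout LoutL finS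
        by (metis calculation(1) finL finS finite_Union finite_subset)
      show "D S \<le> card (A0 \<inter> S)"
      proof (cases "S = {}")
        case True then show ?thesis using Dle S by auto
      next
        case Sne: False
        show ?thesis
        proof (cases "S = M")
          case True
          have "card A1' \<le> card (A0 \<inter> M)" using A0_def A1' finA0 by (intro card_mono) auto
          then show ?thesis using True r'ge(2) A1'(3) by simp
        next
          case SM: False
          have "S \<subseteq> M \<or> M \<subseteq> S \<or> S \<inter> M = {}" using lam S M by blast
          then have "S \<in> Lin \<or> S \<in> Lout" using Mmax S SM Sne Lin_def Lout_def by auto
          then show ?thesis
          proof
            assume "S \<in> Lin"
            then have "D S \<le> card (A1 \<inter> S)" using A1 by auto
            also have "\<dots> \<le> card (A0 \<inter> S)" using A0_def A1' finA0 by (intro card_mono) auto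
            finally show ?thesis .
          next
            assume "S \<in> Lout"
            then have "D S \<le> card (A2 \<inter> S)" using A2 by auto
            also have "\<dots> \<le> card (A0 \<inter> S)" using A0_def finA0 by (intro card_mono) auto
            finally show ?thesis .
          qed
        qed
      qed
    qed
    ultimately show ?thesis by blast
  qed
qed



lemma family_bound:
  fixes P :: "'b set set" and Mf :: "'b set \<Rightarrow> nat"
  assumes finP: "finite P"
   and h1: "\<forall>S\<in>P. Mf S + q \<le> w" and h2: "\<forall>S\<in>P. Mf S + card S \<le> w"
   and h3: "sum card P \<le> w" and pos: "\<forall>S\<in>P. t < Mf S + card S"
   and hk: "5*w \<le> 4*k" and ht: "t + q = k" and hq: "w < 4*q"
  shows "(\<Sum>S\<in>P. Mf S + card S - t) \<le> q"
proof -
  consider "card P = 0" | "card P = 1" | "card P = 2" | "card P \<ge> 3" by linarith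
  then show ?thesis
  proof cases
    case 1 then have "P = {}" using finP card_0_eq by blast
    then show ?thesis by simp
  next
    case 2 then obtain S where "P = {S}" using card_1_singleton_iff[of P] by auto
    then show ?thesis using h2 hk ht by auto
  next
    case 3 then obtain S T where ST: "P = {S, T}" "S \<noteq> T" using card_2_iff[of P] by auto
    then have "card S + card T \<le> w" using h3 by simp
    then show ?thesis using ST h1 h2 hk ht pos by auto
  next
    case 4
    define p where "p = card P"
    have "int (\<Sum>S\<in>P. Mf S + card S - t) = (\<Sum>S\<in>P. int (Mf S) + int (card S) - int t)"
      unfolding of_nat_sum using pos by (intro sum.cong) (auto simp: of_nat_diff)
    also have "\<dots> = (\<Sum>S\<in>P. int (Mf S)) + (\<Sum>S\<in>P. int (card S)) - int p * int t"
      by (simp add: sum.distrib sum_subtractf p_def)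
    also have "(\<Sum>S\<in>P. int (Mf S)) \<le> int p * (int w - int q)"
      using sum_bounded_above[of P "\<lambda>S. int (Mf S)" "int w - int q"] h1 p_def by force
    moreover have "(\<Sum>S\<in>P. int (card S)) \<le> int w" using h3 by (simp flip: of_nat_sum)
    ultimately have A: "int (\<Sum>S\<in>P. Mf S + card S - t) \<le> int p * (int w - int q) + int w - int p * int t"
      by linarith
    have B: "int p * (5 * int w) \<le> int p * (4 * int k)"
      using hk by (intro mult_left_mono) auto
    have C: "3 * int w \<le> int p * int w" using 4 p_def by (intro mult_right_mono) auto
    have D: "int k = int t + int q" using ht by simp
    have "4 * int (\<Sum>S\<in>P. Mf S + card S - t) < 4 * int q"
      using A B C D hq by (simp add: algebra_simps)
    then have "int (\<Sum>S\<in>P. Mf S + card S - t) < int q" by linarith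
    then show ?thesis by linarith
  qed
qed



lemma c4_nest:
  assumes chord: "chordal E Y" and sym: "\<forall>u v. E u v \<longrightarrow> E v u"
    and x: "x \<in> Y" and y: "y \<in> Y" and a: "a \<in> Y" and b: "b \<in> Y"
    and dist: "x \<noteq> a" "x \<noteq> b" "x \<noteq> y" "a \<noteq> b" "a \<noteq> y" "b \<noteq> y"
    and e: "E x a" "E a b" "E b y" "E y x" and ne: "\<not> E x b" "\<not> E a y"
  shows False
proof -
  define f where "f = (\<lambda>i::nat. if i = 0 then x else if i = 1 then a else if i = 2 then b else y)"
  have s4: "{..<4::nat} = {0,1,2,3}" by (auto simp: numeral_eq_Suc lessThan_Suc)
  have e2: "E a x" "E b a" "E y b" "E x y" using e sym by auto
  have ne2: "\<not> E b x" "\<not> E y a" using ne sym by auto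
  have "inj_on f {0,1,2,3}" unfolding inj_on_def f_def using dist by auto
  then have "inj_on f {..<4}" using s4 by simp
  moreover have "f ` {..<4} \<subseteq> Y" unfolding s4 f_def using x y a b by auto
  moreover have "\<forall>i\<in>{0,1,2,3}. \<forall>j\<in>{0,1,2,3}. i \<noteq> j \<longrightarrow> (E (f i) (f j) \<longleftrightarrow> cycle_graph 4 i j)"
    unfolding f_def cycle_graph_def using e e2 ne ne2 by auto
  then have "\<forall>i<4. \<forall>j<4. i \<noteq> j \<longrightarrow> (E (f i) (f j) \<longleftrightarrow> cycle_graph 4 i j)"
    using s4 by (metis lessThan_iff)
  ultimately have "has_induced (cycle_graph 4) 4 E Y" unfolding has_induced_def by blast
  then show False using chord unfolding chordal_def H_free_def by auto
qed



theorem lemma5p14: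
  fixes V :: "'a set" and E :: "'a \<Rightarrow> 'a \<Rightarrow> bool"
  assumes "simple_graph V E"
    and "extended_C_pair V E"
  shows "int (chromatic_number V E) \<le> \<lceil>5 / 4 * real (clique_number V E)\<rceil>"
proof -
  have finV: "finite V" and sym: "\<forall>u v. E u v \<longrightarrow> E v u" and irr: "\<forall>v. \<not> E v v"
    using assms(1) unfolding simple_graph_def by auto
  obtain Q X A where part: "Q \<union> X \<union> A = V" "Q \<inter> X = {}" "Q \<inter> A = {}" "X \<inter> A = {}"
    and CP: "C_pair E X A" and cQ: "clique E Q" and QX: "\<forall>q\<in>Q. \<forall>x\<in>X. E q x"
    and QA: "\<forall>q\<in>Q. \<forall>a\<in>A. \<not> E q a"
    using assms(2) unfolding extended_C_pair_def by blast
  note CP' = CP[unfolded C_pair_def]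
  have chord: "chordal E (X \<union> A)" using CP' by (elim conjE)
  have cA: "clique E A" using CP' by (elim conjE)
  have XA: "\<forall>x\<in>X. \<exists>a\<in>A. E x a" using CP' by (elim conjE)
  have nc: "\<forall>x\<in>X. \<forall>y\<in>X. x \<noteq> y \<and> \<not> E x y \<longrightarrow> \<not> (\<exists>a\<in>A. E x a \<and> E y a)"
    using CP' by (elim conjE)
  have finQ: "finite Q" and finX: "finite X" and finA: "finite A"
    using finV part(1) by (auto intro: finite_subset)
  define w where "w = clique_number V E"
  have F1: "card K \<le> w" if "K \<subseteq> V" "clique E K" for K
  proof -
    have "{card K |K. K \<subseteq> V \<and> clique E K} \<subseteq> card ` Pow V" by auto
    then have "finite {card K |K. K \<subseteq> V \<and> clique E K}" using finV finite_subset by blast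
    then show ?thesis unfolding w_def clique_number_def using that by (intro Max_ge) auto
  qed
  define k where "k = nat \<lceil>5 / 4 * real w\<rceil>"
  have kc: "int k = \<lceil>5 / 4 * real w\<rceil>" unfolding k_def by simp
  have "real k \<ge> 5 / 4 * real w" using kc by (metis le_of_int_ceiling of_int_of_nat_eq)
  then have hk: "5 * w \<le> 4 * k" by linarith
  define q where "q = card Q"
  have qw: "q \<le> w" using F1 cQ part(1) q_def by auto
  have wk: "w \<le> k" using hk by linarith
  define t where "t = k - q"
  have ht: "t + q = k" using qw wk t_def by linarith
  define NA where "NA = (\<lambda>x. {a\<in>A. E x a})"
  have NAA: "NA x \<subseteq> A" for x using NA_def by auto
  have finNA: "finite (NA x)" for x using finA NAA finite_subset by blast
  have nest: "NA x \<subseteq> NA y \<or> NA y \<subseteq> NA x" if xy: "x \<in> X" "y \<in> X" "E x y" for x y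
  proof (rule ccontr)
    assume "\<not> (NA x \<subseteq> NA y \<or> NA y \<subseteq> NA x)"
    then obtain a b where ab: "a \<in> NA x" "a \<notin> NA y" "b \<in> NA y" "b \<notin> NA x" by auto
    have aA: "a \<in> A" "b \<in> A" using ab NA_def by auto
    have e: "E x a" "E y b" "\<not> E y a" "\<not> E x b" using ab aA NA_def by auto
    have "a \<noteq> b" using ab by auto
    then have eab: "E a b" using cA aA unfolding clique_def by auto
    have xy': "x \<noteq> y" using xy irr by auto
    have d: "x \<noteq> a" "x \<noteq> b" "y \<noteq> a" "y \<noteq> b" using xy aA part(4) by auto
    have "E b y" "E y x" using e xy sym by auto
    have "\<not> E a y" using e sym by auto
    show False
      by (rule c4_nest[OF chord sym, of x y a b]) (use xy aA d xy' \<open>a \<noteq> b\<close> e eab \<open>E b y\<close> \<open>E y x\<close> \<open>\<not> E a y\<close> in auto)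
  qed
  have disj: "NA x \<inter> NA y = {}" if "x \<in> X" "y \<in> X" "x \<noteq> y" "\<not> E x y" for x y
  proof -
    have "\<not> (\<exists>a\<in>A. E x a \<and> E y a)" using nc[rule_format, OF that(1) that(2)] that(3,4) by simp
    then show ?thesis unfolding NA_def by blast
  qed
  have ne: "NA x \<noteq> {}" if xX: "x \<in> X" for x
  proof -
    obtain a where "a \<in> A" "E x a" using XA[rule_format, OF xX] by (elim bexE)
    then show ?thesis unfolding NA_def by blast
  qed
  have cliqueQC: "clique E (Q \<union> C)" if CX: "C \<subseteq> X" and cC: "clique E C" for C
    unfolding clique_def
  proof (intro ballI impI)
    fix u v assume u: "u \<in> Q \<union> C" and v: "v \<in> Q \<union> C" and uv: "u \<noteq> v"
    show "E u v"
    proof (cases "u \<in> Q")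
      case uQ: True
      show ?thesis
      proof (cases "v \<in> Q")
        case True then show ?thesis using uQ uv cQ unfolding clique_def by blast
      next
        case False then have "v \<in> X" using v CX by blast
        then show ?thesis using QX uQ by blast
      qed
    next
      case False then have uC: "u \<in> C" using u by blast
      show ?thesis
      proof (cases "v \<in> Q")
        case True then have "E v u" using QX uC CX by blast
        then show ?thesis using sym by blast
      next
        case False then have "v \<in> C" using v by blast
        then show ?thesis using uC uv cC unfolding clique_def by blast
      qed
    qed
  qed
  have cliqueCS: "clique E (C \<union> S)" if CX: "C \<subseteq> X" and cC: "clique E C" and SA: "S \<subseteq> A"
    and CS: "\<forall>c\<in>C. S \<subseteq> NA c" for C S
    unfolding clique_def
  proof (intro ballI impI)
    fix u v assume u: "u \<in> C \<union> S" and v: "v \<in> C \<union> S" and uv: "u \<noteq> v"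
    show "E u v"
    proof (cases "u \<in> C")
      case uC: True
      show ?thesis
      proof (cases "v \<in> C")
        case True then show ?thesis using uC uv cC unfolding clique_def by blast
      next
        case False then have "v \<in> S" using v by blast
        then have "v \<in> NA u" using CS uC by blast
        then show ?thesis unfolding NA_def by blast
      qed
    next
      case False then have uS: "u \<in> S" using u by blast
      show ?thesis
      proof (cases "v \<in> C")
        case True
        then have "u \<in> NA v" using CS uS by blast
        then have "E v u" unfolding NA_def by blast
        then show ?thesis using sym by blast
      next
        case False then have "v \<in> S" using v by blast
        then show ?thesis using uS uv cA SA unfolding clique_def by blast
      qed
    qed
  qed
  have QCw: "card C + q \<le> w" if CX: "C \<subseteq> X" and cC: "clique E C" for C
  proof -
    have finC: "finite C" using CX finX finite_subset by blast
    have "Q \<inter> C = {}" using CX part(2) by blast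
    then have "card (Q \<union> C) = q + card C" using card_Un_disjoint[OF finQ finC] q_def by simp
    moreover have sub: "Q \<union> C \<subseteq> V" using CX part(1) by blast
    moreover have "card (Q \<union> C) \<le> w" by (rule F1[OF sub cliqueQC[OF CX cC]])
    ultimately show ?thesis by linarith
  qed
  have CSw: "card C + card S \<le> w" if CX: "C \<subseteq> X" and cC: "clique E C" and SA: "S \<subseteq> A"
    and CS: "\<forall>c\<in>C. S \<subseteq> NA c" for C S
  proof -
    have finC: "finite C" using CX finX finite_subset by blast
    have finS: "finite S" using SA finA finite_subset by blast
    have "C \<inter> S = {}" using CX SA part(4) by blast
    then have "card (C \<union> S) = card C + card S" using card_Un_disjoint[OF finC finS] by simp
    moreover have sub: "C \<union> S \<subseteq> V" using CX SA part(1) by blast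
    moreover have "card (C \<union> S) \<le> w" by (rule F1[OF sub cliqueCS[OF CX cC SA CS]])
    ultimately show ?thesis by linarith
  qed
  have cardA: "card A \<le> w" using part(1) by (intro F1 cA) blast
  have XV: "X \<union> A \<subseteq> V" using part(1) by blast
  obtain A0 where A0: "A0 \<subseteq> A" "card A0 \<le> q"
    and A0cl: "\<And>K. K \<subseteq> X \<union> (A - A0) \<Longrightarrow> clique E K \<Longrightarrow> card K \<le> t"
  proof (cases "w \<le> t")
    case True
    have "card K \<le> t" if "K \<subseteq> X \<union> (A - {})" "clique E K" for K
    proof -
      have KV: "K \<subseteq> V" using that(1) XV by blast
      show ?thesis using F1[OF KV that(2)] True by linarith
    qed
    then show ?thesis using that[of "{}"] by simp
  next
    case False
    then have hq: "w < 4*q" using hk ht by linarith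
    define CS where "CS S = {C. C \<subseteq> X \<and> clique E C \<and> (\<forall>c\<in>C. S \<subseteq> NA c)}" for S
    define Mf where "Mf S = Max (card ` CS S)" for S
    have finCS: "finite (CS S)" for S
    proof -
      have "CS S \<subseteq> Pow X" unfolding CS_def by blast
      then show ?thesis using finX finite_subset by blast
    qed
    have eCS: "{} \<in> CS S" for S unfolding CS_def clique_def by blast
    have Mf_ge: "card C \<le> Mf S" if "C \<in> CS S" for C S
      unfolding Mf_def using finCS that by (intro Max_ge) auto
    have Mf_in: "\<exists>C\<in>CS S. card C = Mf S" for S
    proof -
      have "Mf S \<in> card ` CS S" unfolding Mf_def using finCS eCS by (intro Max_in) auto
      then show ?thesis by auto
    qed
    have Mq: "Mf S + q \<le> w" for S
    proof -
      obtain C where C: "C \<in> CS S" "card C = Mf S" using Mf_in by blast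
      then have "C \<subseteq> X" "clique E C" unfolding CS_def by auto
      then have "card C + q \<le> w" by (rule QCw)
      then show ?thesis using C(2) by simp
    qed
    have MS: "Mf S + card S \<le> w" if "S \<subseteq> A" for S
    proof -
      obtain C where C: "C \<in> CS S" "card C = Mf S" using Mf_in by blast
      then have "C \<subseteq> X" "clique E C" "\<forall>c\<in>C. S \<subseteq> NA c" unfolding CS_def by auto
      then have "card C + card S \<le> w" using that by (intro CSw) auto
      then show ?thesis using C(2) by simp
    qed
    define L where "L = NA ` X \<union> {A}"
    define D where "D S = Mf S + card S - t" for S
    have LA: "S \<subseteq> A" if "S \<in> L" for S using that NAA unfolding L_def by blast
    have finL: "finite L" using finX unfolding L_def by simp
    have "\<exists>A0. A0 \<subseteq> \<Union>L \<and> card A0 \<le> q \<and> (\<forall>S\<in>L. D S \<le> card (A0 \<inter> S))"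
    proof (rule laminar_hit)
      show "finite L" by (rule finL)
      show "\<forall>S\<in>L. finite S" using LA finA finite_subset by blast
      show "\<forall>S\<in>L. \<forall>T\<in>L. S \<subseteq> T \<or> T \<subseteq> S \<or> S \<inter> T = {}"
      proof (intro ballI)
        fix S T assume S: "S \<in> L" and T: "T \<in> L"
        show "S \<subseteq> T \<or> T \<subseteq> S \<or> S \<inter> T = {}"
        proof (cases "S = A \<or> T = A")
          case True then show ?thesis using LA S T by blast
        next
          case False
          then obtain x y where xy: "x \<in> X" "y \<in> X" "S = NA x" "T = NA y" using S T unfolding L_def by blast
          show ?thesis
          proof (cases "x = y")
            case True then show ?thesis using xy by simp
          next
            case ne: False
            show ?thesis
            proof (cases "E x y")
              case True then show ?thesis using nest[OF xy(1,2)] xy(3,4) by blast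
            next
              case False then show ?thesis using disj[OF xy(1,2) ne] xy(3,4) by blast
            qed
          qed
        qed
      qed
      show "\<forall>S\<in>L. D S \<le> card S"
      proof
        fix S assume "S \<in> L"
        have "Mf S + q \<le> t + q" using Mq[of S] wk ht by linarith
        then show "D S \<le> card S" unfolding D_def by linarith
      qed
      show "\<forall>F\<subseteq>L. pdisj F \<longrightarrow> sum D F \<le> q"
      proof (intro allI impI)
        fix F assume F: "F \<subseteq> L" "pdisj F"
        define P where "P = {S\<in>F. D S \<noteq> 0}"
        have finF: "finite F" using F(1) finL finite_subset by blast
        have PF: "P \<subseteq> F" unfolding P_def by blast
        have finP: "finite P" using PF finF finite_subset by blast
        have "sum D F = sum D P"
          by (rule sum.mono_neutral_right[OF finF PF]) (auto simp: P_def)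
        also have "\<dots> = (\<Sum>S\<in>P. Mf S + card S - t)" unfolding D_def by simp
        also have "\<dots> \<le> q"
        proof (rule family_bound[where w = w and k = k])
          show "finite P" by (rule finP)
          show "\<forall>S\<in>P. Mf S + q \<le> w" using Mq by blast
          have PA: "S \<subseteq> A" if "S \<in> P" for S using that PF F(1) LA by blast
          show "\<forall>S\<in>P. Mf S + card S \<le> w" using PA MS by blast
          have "pairwise disjnt P" using F(2) PF unfolding pdisj_def pairwise_def disjnt_def by blast
          moreover have "\<forall>S\<in>P. finite S" using PA finA finite_subset by blast
          ultimately have "card (\<Union>P) = sum card P" using card_Union_disjoint by blast
          moreover have "card (\<Union>P) \<le> card A" using PA finA by (intro card_mono) auto
          ultimately show "sum card P \<le> w" using cardA by linarith
          show "\<forall>S\<in>P. t < Mf S + card S" unfolding P_def D_def by auto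
          show "5 * w \<le> 4 * k" by (rule hk)
          show "t + q = k" by (rule ht)
          show "w < 4 * q" by (rule hq)
        qed
        finally show "sum D F \<le> q" .
      qed
    qed
    then obtain A0 where A0: "A0 \<subseteq> \<Union>L" "card A0 \<le> q" "\<forall>S\<in>L. D S \<le> card (A0 \<inter> S)" by blast
    have A0A: "A0 \<subseteq> A" using A0(1) LA by blast
    have finA0: "finite A0" using A0A finA finite_subset by blast
    have "card K \<le> t" if K: "K \<subseteq> X \<union> (A - A0)" and cK: "clique E K" for K
    proof -
      have finK: "finite K" using K finX finA finite_subset by blast
      define KX where "KX = K \<inter> X"
      define KA where "KA = K - X"
      have KXA: "K = KX \<union> KA" "KX \<inter> KA = {}" unfolding KX_def KA_def by blast+
      have finKX: "finite KX" "finite KA" using finK KX_def KA_def by auto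
      have cardK: "card K = card KX + card KA" using KXA finKX card_Un_disjoint by metis
      show ?thesis
      proof (cases "KX = {}")
        case True
        then have "K \<subseteq> A - A0" using K KX_def by blast
        then have "card K \<le> card (A - A0)" using finA by (intro card_mono) auto
        also have "\<dots> = card A - card A0" using A0A finA0 by (simp add: card_Diff_subset)
        finally have c1: "card K \<le> card A - card A0" .
        have "A \<in> L" unfolding L_def by blast
        then have "D A \<le> card (A0 \<inter> A)" using A0(3) by blast
        moreover have "A0 \<inter> A = A0" using A0A by blast
        ultimately have "Mf A + card A - t \<le> card A0" unfolding D_def by simp
        then show ?thesis using c1 by linarith
      next
        case False
        define m where "m = Min ((\<lambda>c. card (NA c)) ` KX)"
        have "m \<in> (\<lambda>c. card (NA c)) ` KX" unfolding m_def using False finKX by (intro Min_in) auto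
        then obtain c0 where c0: "c0 \<in> KX" "card (NA c0) = m" by blast
        have c0min: "card (NA c0) \<le> card (NA c)" if "c \<in> KX" for c
          using c0(2) finKX that unfolding m_def by auto
        have c0X: "c0 \<in> X" "c0 \<in> K" using c0 KX_def by auto
        have sub: "NA c0 \<subseteq> NA c" if cK': "c \<in> KX" for c
        proof (cases "c = c0")
          case True then show ?thesis by simp
        next
          case False
          have "c \<in> X" "c \<in> K" using cK' KX_def by auto
          moreover have "c0 \<noteq> c" using False by simp
          ultimately have "E c0 c" using cK c0X unfolding clique_def by blast
          then have "NA c0 \<subseteq> NA c \<or> NA c \<subseteq> NA c0" using nest c0X \<open>c \<in> X\<close> by blast
          then show ?thesis using c0min[OF cK'] card_seteq[OF finNA[of c0]] by blast
        qed
        define S where "S = NA c0"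
        have "KX \<in> CS S" unfolding CS_def S_def KX_def using sub cK
          by (auto simp: clique_def KX_def)
        then have cKX: "card KX \<le> Mf S" using Mf_ge by blast
        have KAS: "KA \<subseteq> S - A0"
        proof
          fix z assume z: "z \<in> KA"
          then have zK: "z \<in> K" "z \<notin> X" using KA_def by auto
          then have zA: "z \<in> A" "z \<notin> A0" using K by auto
          have "c0 \<noteq> z" using zK c0X by auto
          then have "E c0 z" using cK zK c0X unfolding clique_def by blast
          then show "z \<in> S - A0" using zA unfolding S_def NA_def by blast
        qed
        have finS: "finite S" unfolding S_def by (rule finNA)
        have "card KA \<le> card (S - A0)" using KAS finS by (intro card_mono) auto
        also have "\<dots> = card S - card (S \<inter> A0)" using finS by (simp add: card_Diff_subset_Int)
        finally have c2: "card KA \<le> card S - card (S \<inter> A0)" .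
        have "S \<in> L" unfolding L_def S_def using c0X by blast
        then have "D S \<le> card (A0 \<inter> S)" using A0(3) by blast
        moreover have "A0 \<inter> S = S \<inter> A0" by blast
        ultimately have "Mf S + card S - t \<le> card (S \<inter> A0)" unfolding D_def by simp
        moreover have "card (S \<inter> A0) \<le> card S" using finS by (intro card_mono) auto
        ultimately show ?thesis using cardK cKX c2 by linarith
      qed
    qed
    then show ?thesis using that A0A A0(2) by blast
  qed
  define S0 where "S0 = X \<union> (A - A0)"
  define h where "h v = (if v \<in> A then card A + 1 else card (NA v))" for v
  have finS0: "finite S0" unfolding S0_def using finX finA by blast
  have hX: "h v \<le> card A" if "v \<in> X" for v
  proof -
    have "v \<notin> A" using that part(4) by blast
    then show ?thesis unfolding h_def using card_mono[OF finA NAA[of v]] by simp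
  qed
  have hsub: "NA v \<subseteq> NA u" if "v \<in> X" "u \<in> X" "E v u" "h v \<le> h u" for v u
  proof -
    have "v \<notin> A" "u \<notin> A" using that part(4) by blast+
    then have cle: "card (NA v) \<le> card (NA u)" using that(4) unfolding h_def by simp
    have "NA v \<subseteq> NA u \<or> NA u \<subseteq> NA v" using nest that(1-3) by blast
    then show ?thesis using cle card_seteq[OF finNA[of v]] by blast
  qed
  have simpl: "\<forall>v\<in>S0. clique E {u\<in>S0. E v u \<and> h v \<le> h u}"
  proof
    fix v assume vS: "v \<in> S0"
    define W where "W = {u\<in>S0. E v u \<and> h v \<le> h u}"
    show "clique E {u\<in>S0. E v u \<and> h v \<le> h u}" unfolding W_def[symmetric] clique_def
    proof (intro ballI impI)
      fix w1 w2 assume w1: "w1 \<in> W" and w2: "w2 \<in> W" and ne12: "w1 \<noteq> w2"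
      have w1S: "w1 \<in> X \<or> w1 \<in> A" "w2 \<in> X \<or> w2 \<in> A" using w1 w2 unfolding W_def S0_def by blast+
      show "E w1 w2"
      proof (cases "v \<in> A")
        case True
        have "h v = card A + 1" using True unfolding h_def by simp
        then have "h v \<le> h w1" "h v \<le> h w2" using w1 w2 unfolding W_def by auto
        then have "w1 \<notin> X" "w2 \<notin> X" using hX[of w1] hX[of w2] \<open>h v = card A + 1\<close> by linarith+
        then have "w1 \<in> A" "w2 \<in> A" using w1S by auto
        then show ?thesis using cA ne12 unfolding clique_def by blast
      next
        case False
        then have vX: "v \<in> X" using vS unfolding S0_def by blast
        have inA: "u \<in> NA v" if "u \<in> W" "u \<in> A" for u using that unfolding W_def NA_def by blast
        have inX: "NA v \<subseteq> NA u" if "u \<in> W" "u \<in> X" for u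
          using that hsub[OF vX] unfolding W_def by blast
        show ?thesis
        proof (cases "w1 \<in> X")
          case w1X: True
          show ?thesis
          proof (cases "w2 \<in> X")
            case w2X: True
            have "NA v \<subseteq> NA w1 \<inter> NA w2" using inX w1 w2 w1X w2X by blast
            then have "NA w1 \<inter> NA w2 \<noteq> {}" using ne[OF vX] by blast
            then show ?thesis using disj[OF w1X w2X ne12] by blast
          next
            case False
            then have "w2 \<in> A" using w1S by blast
            then have "w2 \<in> NA w1" using inA[OF w2] inX[OF w1 w1X] by blast
            then show ?thesis unfolding NA_def by blast
          qed
        next
          case False
          then have w1A: "w1 \<in> A" using w1S by blast
          show ?thesis
          proof (cases "w2 \<in> X")
            case w2X: True
            then have "w1 \<in> NA w2" using inA[OF w1 w1A] inX[OF w2 w2X] by blast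
            then have "E w2 w1" unfolding NA_def by blast
            then show ?thesis using sym by blast
          next
            case False
            then have "w2 \<in> A" using w1S by blast
            then show ?thesis using w1A cA ne12 unfolding clique_def by blast
          qed
        qed
      qed
    qed
  qed
  have clS0: "\<forall>K\<subseteq>S0. clique E K \<longrightarrow> card K \<le> t" using A0cl unfolding S0_def by blast
  obtain c1 where c1: "\<forall>v\<in>S0. c1 v < t" "\<forall>u\<in>S0. \<forall>v\<in>S0. E u v \<longrightarrow> c1 u \<noteq> c1 v"
    using greedy_colour[OF finS0 sym irr simpl clS0] by blast
  obtain g where g: "bij_betw g Q {0..<card Q}" using ex_bij_betw_finite_nat[OF finQ] by blast
  have finA0: "finite A0" using A0(1) finA finite_subset by blast
  obtain g' where g': "bij_betw g' A0 {0..<card A0}" using ex_bij_betw_finite_nat[OF finA0] by blast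
  define col where "col v = (if v \<in> Q then g v else if v \<in> A0 then g' v else q + c1 v)" for v
  have gq: "g v < q" if "v \<in> Q" for v using bij_betw_apply[OF g that] q_def by simp
  have g'q: "g' v < q" if "v \<in> A0" for v using bij_betw_apply[OF g' that] A0(2) by simp
  have restS0: "v \<in> S0" if "v \<in> V" "v \<notin> Q" "v \<notin> A0" for v
    using that part(1) unfolding S0_def by blast
  have "proper_colouring V E k col"
    unfolding proper_colouring_def
  proof (intro conjI ballI impI)
    fix v assume v: "v \<in> V"
    show "col v < k"
    proof (cases "v \<in> Q")
      case True then show ?thesis using gq ht unfolding col_def by fastforce
    next
      case nQ: False
      show ?thesis
      proof (cases "v \<in> A0")
        case True then show ?thesis using g'q nQ ht unfolding col_def by fastforce
      next
        case False
        then have "c1 v < t" using c1(1) restS0[OF v nQ False] by blast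
        then show ?thesis using nQ False ht unfolding col_def by simp
      qed
    qed
  next
    fix u v assume u: "u \<in> V" and v: "v \<in> V" and e: "E u v"
    have uv: "u \<noteq> v" using e irr by auto
    have gi: "inj_on g Q" "inj_on g' A0" using g g' bij_betw_def by auto
    have A0Q: "A0 \<inter> Q = {}" using A0(1) part(3) by blast
    show "col u \<noteq> col v"
    proof (cases "u \<in> Q")
      case uQ: True
      show ?thesis
      proof (cases "v \<in> Q")
        case True then show ?thesis using uQ uv gi(1) unfolding col_def inj_on_def by auto
      next
        case vQ: False
        show ?thesis
        proof (cases "v \<in> A0")
          case True then have "v \<in> A" using A0(1) by blast
          then show ?thesis using QA uQ e by blast
        next
          case False
          then show ?thesis using uQ vQ gq[OF uQ] unfolding col_def by simp
        qed
      qed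
    next
      case uQ: False
      show ?thesis
      proof (cases "u \<in> A0")
        case uA0: True
        show ?thesis
        proof (cases "v \<in> Q")
          case True
          have "u \<in> A" using uA0 A0(1) by blast
          moreover have "E v u" using e sym by blast
          ultimately show ?thesis using QA True by blast
        next
          case vQ: False
          show ?thesis
          proof (cases "v \<in> A0")
            case True then show ?thesis using uA0 uQ vQ uv gi(2) unfolding col_def inj_on_def by auto
          next
            case False then show ?thesis using uA0 uQ vQ g'q[OF uA0] unfolding col_def by simp
          qed
        qed
      next
        case uA0: False
        have uS: "u \<in> S0" using restS0[OF u uQ uA0] .
        show ?thesis
        proof (cases "v \<in> Q")
          case True then show ?thesis using uQ uA0 gq[OF True] unfolding col_def by simp
        next
          case vQ: False
          show ?thesis
          proof (cases "v \<in> A0")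
            case True then show ?thesis using uQ uA0 vQ g'q[OF True] unfolding col_def by simp
          next
            case False
            have vS: "v \<in> S0" using restS0[OF v vQ False] .
            have "c1 u \<noteq> c1 v" using c1(2) uS vS e by blast
            then show ?thesis using uQ uA0 vQ False unfolding col_def by simp
          qed
        qed
      qed
    qed
  qed
  then have "chromatic_number V E \<le> k" unfolding chromatic_number_def by (intro Least_le) blast
  then have "int (chromatic_number V E) \<le> int k" by simp
  then show ?thesis using kc w_def by simp
qed


end
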